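(* Logical convergence does not in general imply convergence in the $n$-bisimulation topology: there exist a countable atom set $\Phi$, a finite agent set $I$, a logic $\Lambda$, an $\boldsymbol{\mathcal{L}}_\Lambda$ modal space $\boldsymbol{X}$ in which modal equivalence and bisimilarity coincide, a point $\boldsymbol{x}\in\boldsymbol{X}$ and a sequence $\boldsymbol{x}_1,\boldsymbol{x}_2,\dots$ in $\boldsymbol{X}$ that logically converges to $\boldsymbol{x}$ but does not converge to $\boldsymbol{x}$ in $(\boldsymbol{X},\mathcal{T}_B)$.
   Context: Given a countable set $\Phi$ of atoms and a finite set $I$ of agents, $\mathcal{L}$ is the multi-agent modal language $\varphi::=\top\mid p\mid\neg\varphi\mid\varphi\wedge\varphi\mid\square_i\varphi$. A logic $\Lambda$ is a normal modal logic over $\mathcal{L}$ extending $K$; $\boldsymbol{\varphi}$ is the class of formulas $\Lambda$-equivalent to $\varphi$ and $\boldsymbol{\mathcal{L}}_\Lambda$ the set of such classes. Kripke models have countable nonempty state sets, relations $R_i$ ($i\in I$) and a valuation of $\Phi$; pointed Kripke models $Ms$ are evaluated with standard semantics. For a set $X$ of pointed Kripke models, the $\boldsymbol{\mathcal{L}}_\Lambda$ modal space is $\boldsymbol{X}=\{\boldsymbol{x}:x\in X\}$ with $\boldsymbol{x}=\{y\in X:y\vDash\varphi\text{ iff }x\vDash\varphi\text{ for all }\varphi\in\mathcal{L}\}$. A sequence $\boldsymbol{x}_1,\boldsymbol{x}_2,\dots$ logically converges to $\boldsymbol{x}$ if for every $\varphi$ with $x\vDash\varphi$ there is $N$ with $x_n\vDash\varphi$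 for all $n\ge N$. When modal equivalence and bisimilarity coincide on $X$, the $n$-bisimulation metric is $d_B(\boldsymbol{x},\boldsymbol{y})=0$ if $x$ and $y$ are $n$-bisimilar for all $n\in\mathbb{N}_0$, and $d_B(\boldsymbol{x},\boldsymbol{y})=2^{-n}$ for the least $n$ such that $x,y$ are not $n$-bisimilar; $\mathcal{T}_B$ is the topology it induces. *)

theory Defs
  imports "HOL-Analysis.Analysis"
begin

text \<open>Atoms and agents are natural numbers; the actual atom set Phi (countable,
  being a subset of nat) and agent set I (finite) are parameters.\<close>

datatype fm = Top | Atom nat | Neg fm | Conj fm fm | Box nat fm

fun atoms :: "fm \<Rightarrow> nat set" where
  "atoms Top = {}"
| "atoms (Atom p) = {p}"
| "atoms (Neg a) = atoms a"
| "atoms (Conj a b) = atoms a \<union> atoms b"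
| "atoms (Box i a) = atoms a"

fun agents :: "fm \<Rightarrow> nat set" where
  "agents Top = {}"
| "agents (Atom p) = {}"
| "agents (Neg a) = agents a"
| "agents (Conj a b) = agents a \<union> agents b"
| "agents (Box i a) = insert i (agents a)"

definition lang :: "nat set \<Rightarrow> nat set \<Rightarrow> fm set" where
  "lang Phi I = {a. atoms a \<subseteq> Phi \<and> agents a \<subseteq> I}"

definition imp :: "fm \<Rightarrow> fm \<Rightarrow> fm" where
  "imp a b = Neg (Conj a (Neg b))"

fun peval :: "(fm \<Rightarrow> bool) \<Rightarrow> fm \<Rightarrow> bool" where
  "peval v Top = True"
| "peval v (Atom p) = v (Atom p)"
| "peval v (Neg a) = (\<not> peval v a)"
| "peval v (Conj a b) = (peval v a \<and> peval v b)"
| "peval v (Box i a) = v (Box i a)"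

definition taut :: "fm \<Rightarrow> bool" where
  "taut a = (\<forall>v. peval v a)"

fun subst :: "(nat \<Rightarrow> fm) \<Rightarrow> fm \<Rightarrow> fm" where
  "subst s Top = Top"
| "subst s (Atom p) = s p"
| "subst s (Neg a) = Neg (subst s a)"
| "subst s (Conj a b) = Conj (subst s a) (subst s b)"
| "subst s (Box i a) = Box i (subst s a)"

definition normal_logic :: "nat set \<Rightarrow> nat set \<Rightarrow> fm set \<Rightarrow> bool" where
  "normal_logic Phi I Lam \<longleftrightarrow>
     Lam \<subseteq> lang Phi I
   \<and> (\<forall>a \<in> lang Phi I. taut a \<longrightarrow> a \<in> Lam)
   \<and> (\<forall>i \<in> I. \<forall>a \<in> lang Phi I. \<forall>b \<in> lang Phi I.
        imp (Box i (imp a b)) (imp (Box i a) (Box i b)) \<in> Lam)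
   \<and> (\<forall>a b. a \<in> Lam \<longrightarrow> imp a b \<in> Lam \<longrightarrow> b \<in> Lam)
   \<and> (\<forall>i \<in> I. \<forall>a \<in> Lam. Box i a \<in> Lam)
   \<and> (\<forall>s a. (\<forall>p \<in> Phi. s p \<in> lang Phi I) \<longrightarrow> a \<in> Lam \<longrightarrow> subst s a \<in> Lam)"

text \<open>Kripke models with (countable, as subsets of nat) state sets.\<close>
record kmodel =
  wrld :: "nat set"
  rel :: "nat \<Rightarrow> nat \<Rightarrow> nat \<Rightarrow> bool"
  val :: "nat \<Rightarrow> nat set"

definition kripke :: "kmodel \<Rightarrow> bool" where
  "kripke M \<longleftrightarrow> wrld M \<noteq> {}
     \<and> (\<forall>i s t. rel M i s t \<longrightarrow> s \<in> wrld M \<and> t \<in> wrld M)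
     \<and> (\<forall>p. val M p \<subseteq> wrld M)"

type_synonym pointed = "kmodel \<times> nat"

definition pointed_model :: "pointed \<Rightarrow> bool" where
  "pointed_model x \<longleftrightarrow> kripke (fst x) \<and> snd x \<in> wrld (fst x)"

fun sat :: "kmodel \<Rightarrow> nat \<Rightarrow> fm \<Rightarrow> bool" where
  "sat M s Top = True"
| "sat M s (Atom p) = (s \<in> val M p)"
| "sat M s (Neg a) = (\<not> sat M s a)"
| "sat M s (Conj a b) = (sat M s a \<and> sat M s b)"
| "sat M s (Box i a) = (\<forall>t. rel M i s t \<longrightarrow> sat M t a)"

definition psat :: "pointed \<Rightarrow> fm \<Rightarrow> bool" where
  "psat x a = sat (fst x) (snd x) a"

definition modeq :: "nat set \<Rightarrow> nat set \<Rightarrow> pointed \<Rightarrow> pointed \<Rightarrow> bool" where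
  "modeq Phi I x y \<longleftrightarrow> (\<forall>a \<in> lang Phi I. psat x a \<longleftrightarrow> psat y a)"

definition bisimilar :: "nat set \<Rightarrow> nat set \<Rightarrow> pointed \<Rightarrow> pointed \<Rightarrow> bool" where
  "bisimilar Phi I x y \<longleftrightarrow> (\<exists>Z. Z (snd x) (snd y) \<and>
     (\<forall>u v. Z u v \<longrightarrow>
        u \<in> wrld (fst x) \<and> v \<in> wrld (fst y)
      \<and> (\<forall>p \<in> Phi. u \<in> val (fst x) p \<longleftrightarrow> v \<in> val (fst y) p)
      \<and> (\<forall>i \<in> I. \<forall>u'. rel (fst x) i u u' \<longrightarrow> (\<exists>v'. rel (fst y) i v v' \<and> Z u' v'))
      \<and> (\<forall>i \<in> I. \<forall>v'. rel (fst y) i v v' \<longrightarrow> (\<exists>u'. rel (fst x) i u u' \<and> Z u' v'))))"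

fun nbisim :: "nat set \<Rightarrow> nat set \<Rightarrow> nat \<Rightarrow> kmodel \<Rightarrow> nat \<Rightarrow> kmodel \<Rightarrow> nat \<Rightarrow> bool" where
  "nbisim Phi I 0 M u N v = (\<forall>p \<in> Phi. u \<in> val M p \<longleftrightarrow> v \<in> val N p)"
| "nbisim Phi I (Suc n) M u N v =
     ((\<forall>p \<in> Phi. u \<in> val M p \<longleftrightarrow> v \<in> val N p)
    \<and> (\<forall>i \<in> I. \<forall>u'. rel M i u u' \<longrightarrow> (\<exists>v'. rel N i v v' \<and> nbisim Phi I n M u' N v'))
    \<and> (\<forall>i \<in> I. \<forall>v'. rel N i v v' \<longrightarrow> (\<exists>u'. rel M i u u' \<and> nbisim Phi I n M u' N v')))"

definition pnbisim :: "nat set \<Rightarrow> nat set \<Rightarrow> nat \<Rightarrow> pointed \<Rightarrow> pointed \<Rightarrow> bool" where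
  "pnbisim Phi I n x y = nbisim Phi I n (fst x) (snd x) (fst y) (snd y)"

definition cls :: "nat set \<Rightarrow> nat set \<Rightarrow> pointed set \<Rightarrow> pointed \<Rightarrow> pointed set" where
  "cls Phi I X x = {y \<in> X. modeq Phi I x y}"

definition modal_space :: "nat set \<Rightarrow> nat set \<Rightarrow> pointed set \<Rightarrow> pointed set set" where
  "modal_space Phi I X = cls Phi I X ` X"

definition dB_pt :: "nat set \<Rightarrow> nat set \<Rightarrow> pointed \<Rightarrow> pointed \<Rightarrow> real" where
  "dB_pt Phi I x y = (if \<forall>n. pnbisim Phi I n x y then 0
                      else (1/2) ^ (LEAST n. \<not> pnbisim Phi I n x y))"

definition dB :: "nat set \<Rightarrow> nat set \<Rightarrow> pointed set \<Rightarrow> pointed set \<Rightarrow> real" where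
  "dB Phi I c d = dB_pt Phi I (SOME x. x \<in> c) (SOME y. y \<in> d)"

definition TB :: "nat set \<Rightarrow> nat set \<Rightarrow> pointed set \<Rightarrow> pointed set topology" where
  "TB Phi I X = Metric_space.mtopology (modal_space Phi I X) (dB Phi I)"

definition logically_converges ::
  "nat set \<Rightarrow> nat set \<Rightarrow> (nat \<Rightarrow> pointed) \<Rightarrow> pointed \<Rightarrow> bool" where
  "logically_converges Phi I xs x \<longleftrightarrow>
     (\<forall>a \<in> lang Phi I. psat x a \<longrightarrow> (\<exists>N. \<forall>n \<ge> N. psat (xs n) a))"

end

theory Submission
  imports Defs
begin

definition agr :: "pointed \<Rightarrow> pointed \<Rightarrow> bool" where
  "agr x y = (\<forall>p. snd x \<in> val (fst x) p \<longleftrightarrow> snd y \<in> val (fst y) p)"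

lemma agree: "agents a = {} \<Longrightarrow> \<forall>p\<in>atoms a. (snd x \<in> val (fst x) p \<longleftrightarrow> snd y \<in> val (fst y) p)
  \<Longrightarrow> psat x a = psat y a"
  by (induction a) (auto simp: psat_def)

lemma modeq_iff: "modeq UNIV {} x y \<longleftrightarrow> agr x y"
proof
  assume m: "modeq UNIV {} x y"
  show "agr x y" unfolding agr_def
  proof
    fix p
    have "Atom p \<in> lang UNIV {}" by (simp add: lang_def)
    then have "psat x (Atom p) = psat y (Atom p)" using m unfolding modeq_def by blast
    then show "snd x \<in> val (fst x) p \<longleftrightarrow> snd y \<in> val (fst y) p" by (simp add: psat_def)
  qed
next
  assume g: "agr x y"
  show "modeq UNIV {} x y" unfolding modeq_def
  proof
    fix a assume "a \<in> lang UNIV {}"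
    then have "agents a = {}" by (simp add: lang_def)
    then show "psat x a = psat y a" by (rule agree) (use g in \<open>simp add: agr_def\<close>)
  qed
qed

lemma nbisim_iff: "nbisim UNIV {} n M u N v \<longleftrightarrow> (\<forall>p. u \<in> val M p \<longleftrightarrow> v \<in> val N p)"
  by (cases n) auto

lemma pnbisim_iff: "pnbisim UNIV {} n a b \<longleftrightarrow> agr a b"
  unfolding pnbisim_def agr_def nbisim_iff by (rule refl)

lemma dB_pt_eq: "dB_pt UNIV {} a b = (if modeq UNIV {} a b then 0 else 1)"
proof (cases "agr a b")
  case True
  then have "\<forall>n. pnbisim UNIV {} n a b" by (simp add: pnbisim_iff)
  then show ?thesis using True unfolding dB_pt_def modeq_iff by simp
next
  case False
  then have nb: "\<not> pnbisim UNIV {} 0 a b" by (simp add: pnbisim_iff)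
  then have "(LEAST n. \<not> pnbisim UNIV {} n a b) = 0" by (rule Least_eq_0)
  then show ?thesis using False nb unfolding dB_pt_def modeq_iff by auto
qed

lemma modeq_equiv:
  "modeq Phi I x x" "modeq Phi I x y \<Longrightarrow> modeq Phi I y x"
  "modeq Phi I x y \<Longrightarrow> modeq Phi I y z \<Longrightarrow> modeq Phi I x z"
  unfolding modeq_def by auto

lemma cls_eq: "x \<in> X \<Longrightarrow> y \<in> X \<Longrightarrow> cls Phi I X x = cls Phi I X y \<longleftrightarrow> modeq Phi I x y"
proof
  assume x: "x \<in> X" and y: "y \<in> X"
  assume "cls Phi I X x = cls Phi I X y"
  moreover have "y \<in> cls Phi I X y" using y modeq_equiv(1) unfolding cls_def by simp
  ultimately have "y \<in> cls Phi I X x" by simp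
  then show "modeq Phi I x y" unfolding cls_def by simp
next
  assume x: "x \<in> X" and y: "y \<in> X" and m: "modeq Phi I x y"
  show "cls Phi I X x = cls Phi I X y" unfolding cls_def
    using m modeq_equiv(2,3) by blast
qed

lemma dB_eq:
  assumes "c \<in> modal_space UNIV {} X" "e \<in> modal_space UNIV {} X"
  shows "dB UNIV {} c e = (if c = e then 0 else 1)"
proof -
  obtain x0 where x0: "x0 \<in> X" "c = cls UNIV {} X x0" using assms unfolding modal_space_def by auto
  obtain y0 where y0: "y0 \<in> X" "e = cls UNIV {} X y0" using assms unfolding modal_space_def by auto
  have "x0 \<in> c" using x0 modeq_equiv(1) unfolding cls_def by auto
  then have a: "(SOME x. x \<in> c) \<in> c" by (metis someI)
  have "y0 \<in> e" using y0 modeq_equiv(1) unfolding cls_def by auto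
  then have b: "(SOME x. x \<in> e) \<in> e" by (metis someI)
  define a0 where "a0 = (SOME x. x \<in> c)"
  define b0 where "b0 = (SOME x. x \<in> e)"
  have ma: "modeq UNIV {} x0 a0" using a x0 unfolding a0_def cls_def by auto
  have mb: "modeq UNIV {} y0 b0" using b y0 unfolding b0_def cls_def by auto
  have "modeq UNIV {} a0 b0 \<longleftrightarrow> modeq UNIV {} x0 y0"
    using ma mb modeq_equiv by metis
  moreover have "c = e \<longleftrightarrow> modeq UNIV {} x0 y0" using cls_eq[OF x0(1) y0(1)] x0(2) y0(2) by simp
  ultimately have "modeq UNIV {} a0 b0 \<longleftrightarrow> c = e" by simp
  then show ?thesis unfolding dB_def a0_def[symmetric] b0_def[symmetric] dB_pt_eq by simp
qed

lemma dB_commute: "dB UNIV {} c e = dB UNIV {} e c"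
  unfolding dB_def dB_pt_eq using modeq_equiv(2) by metis

lemma dB_nonneg: "0 \<le> dB UNIV {} c e"
  unfolding dB_def dB_pt_eq by auto

lemma metric: "Metric_space (modal_space UNIV {} X) (dB UNIV {})"
  apply unfold_locales
  using dB_nonneg dB_commute dB_eq by auto

lemma sat_peval: "sat M s a = peval (\<lambda>f. sat M s f) a"
  by (induction a) auto

lemma taut_sat: "taut a \<Longrightarrow> psat y a"
  unfolding taut_def psat_def using sat_peval by metis

definition sv :: "(fm \<Rightarrow> bool) \<Rightarrow> (nat \<Rightarrow> fm) \<Rightarrow> fm \<Rightarrow> bool" where
  "sv v s f = (case f of Atom p \<Rightarrow> peval v (s p) | Box i b \<Rightarrow> v (Box i (subst s b)) | _ \<Rightarrow> False)"

lemma peval_subst: "peval v (subst s a) = peval (sv v s) a"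
  by (induction a) (auto simp: sv_def)

lemma agents_subst: "\<forall>p. agents (s p) = {} \<Longrightarrow> agents a = {} \<Longrightarrow> agents (subst s a) = {}"
  by (induction a) auto

lemma normal: "normal_logic UNIV {} {a \<in> lang UNIV {}. taut a}"
  unfolding normal_logic_def
proof (intro conjI)
  show "\<forall>a b. a \<in> {a \<in> lang UNIV {}. taut a} \<longrightarrow> imp a b \<in> {a \<in> lang UNIV {}. taut a} \<longrightarrow>
     b \<in> {a \<in> lang UNIV {}. taut a}"
    unfolding lang_def taut_def imp_def by auto
  show "\<forall>s a. (\<forall>p\<in>UNIV. s p \<in> lang UNIV {}) \<longrightarrow> a \<in> {a \<in> lang UNIV {}. taut a} \<longrightarrow>
     subst s a \<in> {a \<in> lang UNIV {}. taut a}"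
    unfolding lang_def taut_def using peval_subst agents_subst by auto
qed auto

definition mdl :: "(nat \<Rightarrow> nat set) \<Rightarrow> pointed" where
  "mdl f = (\<lparr>wrld = {0}, rel = (\<lambda>_ _ _. False), val = (\<lambda>p. f p \<inter> {0})\<rparr>, 0)"

lemma bisim: "modeq UNIV {} y z \<longleftrightarrow> bisimilar UNIV {} y z" if "pointed_model y" "pointed_model z"
proof
  assume "modeq UNIV {} y z"
  then have "agr y z" by (simp add: modeq_iff)
  then show "bisimilar UNIV {} y z" unfolding bisimilar_def
    apply (rule_tac x="\<lambda>u v. u = snd y \<and> v = snd z" in exI)
    using that unfolding pointed_model_def agr_def by auto
next
  assume "bisimilar UNIV {} y z"
  then have "agr y z" unfolding bisimilar_def agr_def by auto
  then show "modeq UNIV {} y z" by (simp add: modeq_iff)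
qed

theorem proposition1:
  shows "\<exists>(Phi :: nat set) (I :: nat set) (Lam :: fm set) (X :: pointed set) x xs.
    countable Phi \<and> finite I
  \<and> normal_logic Phi I Lam
  \<and> (\<forall>y \<in> X. pointed_model y \<and> (\<forall>a \<in> Lam. psat y a))
  \<and> (\<forall>y \<in> X. \<forall>z \<in> X. modeq Phi I y z \<longleftrightarrow> bisimilar Phi I y z)
  \<and> x \<in> X \<and> (\<forall>n. xs n \<in> X)
  \<and> logically_converges Phi I xs x
  \<and> \<not> limitin (TB Phi I X) (\<lambda>n. cls Phi I X (xs n)) (cls Phi I X x) sequentially"
proof -
  define X where "X = {y. pointed_model y}"
  define x where "x = mdl (\<lambda>p. {})"
  define xs where "xs = (\<lambda>n. mdl (\<lambda>p. if p = n then {0} else {}))"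
  have pm: "pointed_model (mdl f)" for f unfolding mdl_def pointed_model_def kripke_def by auto
  have xX: "x \<in> X" and xsX: "\<forall>n. xs n \<in> X" using pm unfolding X_def x_def xs_def by auto
  have lc: "logically_converges UNIV {} xs x"
    unfolding logically_converges_def
  proof (intro ballI impI)
    fix a assume a: "a \<in> lang UNIV {}" "psat x a"
    have "finite (atoms a)" by (induction a) auto
    then obtain N where N: "\<forall>p\<in>atoms a. p < N"
      by (metis finite_nat_set_iff_bounded)
    have "psat (xs n) a" if "n \<ge> N" for n
    proof -
      have "psat (xs n) a = psat x a"
        apply (rule agree) using a N that unfolding lang_def xs_def x_def mdl_def by auto
      then show ?thesis using a by simp
    qed
    then show "\<exists>N. \<forall>n\<ge>N. psat (xs n) a" by blast
  qed
  have nl: "\<not> limitin (TB UNIV {} X) (\<lambda>n. cls UNIV {} X (xs n)) (cls UNIV {} X x) sequentially"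
  proof
    assume l: "limitin (TB UNIV {} X) (\<lambda>n. cls UNIV {} X (xs n)) (cls UNIV {} X x) sequentially"
    interpret M: Metric_space "modal_space UNIV {} X" "dB UNIV {}" by (rule metric)
    have l2: "\<forall>\<epsilon>>0. \<forall>\<^sub>F n in sequentially. cls UNIV {} X (xs n) \<in> modal_space UNIV {} X \<and>
        dB UNIV {} (cls UNIV {} X (xs n)) (cls UNIV {} X x) < \<epsilon>"
      using M.limitin_metric[THEN iffD1, OF l[unfolded TB_def]] by blast
    have "\<forall>\<^sub>F n in sequentially. cls UNIV {} X (xs n) \<in> modal_space UNIV {} X \<and>
        dB UNIV {} (cls UNIV {} X (xs n)) (cls UNIV {} X x) < 1"
      using l2 zero_less_one by blast
    then obtain N where "\<forall>n\<ge>N. cls UNIV {} X (xs n) \<in> modal_space UNIV {} X \<and>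
        dB UNIV {} (cls UNIV {} X (xs n)) (cls UNIV {} X x) < 1"
      unfolding eventually_sequentially by blast
    then have n: "dB UNIV {} (cls UNIV {} X (xs N)) (cls UNIV {} X x) < 1" by blast
    define n where "n = N"
    note n = n[folded n_def]
    have ms: "cls UNIV {} X (xs n) \<in> modal_space UNIV {} X" "cls UNIV {} X x \<in> modal_space UNIV {} X"
      using xX xsX unfolding modal_space_def by auto
    have "(if cls UNIV {} X (xs n) = cls UNIV {} X x then 0 else 1) < (1::real)"
      using n unfolding dB_eq[OF ms] .
    then have "cls UNIV {} X (xs n) = cls UNIV {} X x"
      by (cases "cls UNIV {} X (xs n) = cls UNIV {} X x") auto
    then have "modeq UNIV {} (xs n) x" using cls_eq[OF xsX[rule_format] xX] by blast
    then have g: "agr (xs n) x" by (simp add: modeq_iff)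
    have "snd (xs n) \<in> val (fst (xs n)) n" by (simp add: xs_def mdl_def)
    moreover have "snd x \<notin> val (fst x) n" by (simp add: x_def mdl_def)
    ultimately show False using g unfolding agr_def by blast
  qed
  have A: "\<forall>y\<in>X. pointed_model y \<and> (\<forall>a\<in>{a \<in> lang UNIV {}. taut a}. psat y a)"
    using taut_sat unfolding X_def by blast
  have B: "\<forall>y\<in>X. \<forall>z\<in>X. modeq UNIV {} y z \<longleftrightarrow> bisimilar UNIV {} y z"
    using bisim unfolding X_def by blast
  have C: "countable (UNIV :: nat set)" "finite ({} :: nat set)" by simp_all
  show ?thesis
    apply (rule exI[of _ UNIV], rule exI[of _ "{}"], rule exI[of _ "{a \<in> lang UNIV {}. taut a}"],
        rule exI[of _ X], rule exI[of _ x], rule exI[of _ xs])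
    using C normal A B xX xsX lc nl by blast
qed

end
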